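(* Let $d\ge 1$ be an integer, $K=d+3$, and let $\overline{\gamma}=(\gamma_1,\dots,\gamma_d)\in\mathbb{R}^d$ satisfy condition (KM). Let $X$ be $\mathbb{R}^2$ with a norm $\|\cdot\|_X$ whose closed unit ball $BX$ is a symmetric convex polygon with $2K$ sides whose $K$ pairwise non-parallel sides have slopes $\gamma_1,\dots,\gamma_d,0,1,\infty$, and write $BX=\bigcap_{k=1}^K\{x:|x\cdot b_k|\le 1\}$ with vectors $b_1,\dots,b_K\in\mathbb{R}^2$. Then for every $\varepsilon>0$ there are constants $C,c>0$ (depending on $\varepsilon$) and arbitrarily large integers $n$ for which there exist sets $A=A(n)\subset B(0,1/2)$ with $|A|=n$ such that $$|(A-A)\cdot b_k|\le C n^{1/2+\varepsilon},\quad k=1,\dots,K$$ (in particular $|\Delta_X(A)|\le C' n^{1/2+\varepsilon}$ for a constant $C'$ independent of $n$), and $$\|x-x'\|_X\ge c\, n^{-1/2-\varepsilon}\quad\text{for all } x,x'\in A,\ x\ne x'.$$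
   Context: Slopes are with respect to the standard coordinates: the slope of a non-degenerate segment on the line $u_1x_1+u_2x_2+u_0=0$ is $-u_1/u_2$ (and $\infty$ if $u_2=0$). For a positive integer $L$ let $\mathcal{L}(L)=\{\overline{l}=(l_1,\dots,l_d)\in\mathbb{Z}^d: 0\le l_k<L\}$. A vector $\overline{\gamma}\in\mathbb{R}^d$ satisfies condition (KM) if for every positive integer $L$ and every $\varepsilon>0$, $\inf|\sum_{\overline{l}\in\mathcal{L}(L)} n_{\overline{l}}\gamma_1^{l_1}\cdots\gamma_d^{l_d}|\cdot(\max_{\overline{l}}|n_{\overline{l}}|)^{(1+\varepsilon)L^d}>0$, the infimum over all nonzero integer vectors $(n_{\overline{l}})_{\overline{l}\in\mathcal{L}(L)}$. $B(x,r)$ is the closed Euclidean ball; $|A|$ is cardinality; $A-A=\{a-a'\}$, $A\cdot v=\{a\cdot v:a\in A\}$; $\Delta_X(A)=\{\|x-x'\|_X:x,x'\in A\}$. The constants are independent of $n$. *)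

theory Defs
  imports "HOL-Analysis.Analysis"
begin

definition lattice_idx :: "nat \<Rightarrow> nat \<Rightarrow> (nat \<Rightarrow> nat) set" where
  "lattice_idx d L = {l. \<forall>k. (k < d \<longrightarrow> l k < L) \<and> (d \<le> k \<longrightarrow> l k = 0)}"

definition KM :: "nat \<Rightarrow> (nat \<Rightarrow> real) \<Rightarrow> bool" where
  "KM d \<gamma> \<longleftrightarrow>
    (\<forall>L::nat. L > 0 \<longrightarrow> (\<forall>\<epsilon>::real. \<epsilon> > 0 \<longrightarrow>
      Inf ((\<lambda>n::(nat \<Rightarrow> nat) \<Rightarrow> int.
              \<bar>\<Sum>l\<in>lattice_idx d L. of_int (n l) * (\<Prod>k<d. \<gamma> k ^ l k)\<bar>
              * real_of_int (Max ((\<lambda>l. \<bar>n l\<bar>) ` lattice_idx d L)) powr ((1 + \<epsilon>) * real L ^ d))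
           ` {n. \<exists>l\<in>lattice_idx d L. n l \<noteq> 0}) > 0))"

definition is_norm :: "(real^2 \<Rightarrow> real) \<Rightarrow> bool" where
  "is_norm N \<longleftrightarrow> (\<forall>x. N x = 0 \<longleftrightarrow> x = 0) \<and> (\<forall>a x. N (a *\<^sub>R x) = \<bar>a\<bar> * N x)
     \<and> (\<forall>x y. N (x + y) \<le> N x + N y)"

text \<open>The line x \<bullet> b = 1, i.e. b1 x1 + b2 x2 - 1 = 0, has slope s (finite) iff b2 \<noteq> 0 and -b1/b2 = s;
  it has slope \<infinity> iff b2 = 0.\<close>
definition has_slope :: "real^2 \<Rightarrow> real \<Rightarrow> bool" where
  "has_slope b s \<longleftrightarrow> b $ 2 \<noteq> 0 \<and> - (b $ 1) / (b $ 2) = s"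

definition has_infinite_slope :: "real^2 \<Rightarrow> bool" where
  "has_infinite_slope b \<longleftrightarrow> b $ 2 = 0 \<and> b $ 1 \<noteq> 0"

definition diff_set :: "(real^2) set \<Rightarrow> (real^2) set" where
  "diff_set A = {a - a' | a a'. a \<in> A \<and> a' \<in> A}"

end

theory Submission
  imports Defs "HOL-Real_Asymp.Real_Asymp"
begin


lemma idx_bij: "bij_betw (\<lambda>l. restrict l {..<d}) (lattice_idx d L) (PiE {..<d} (\<lambda>_. {..<L}))"
proof (rule bij_betw_byWitness[where f' = "\<lambda>f k. if k < d then f k else 0"])
  show "\<forall>a\<in>lattice_idx d L. (\<lambda>k. if k < d then restrict a {..<d} k else 0) = a"
  proof
    fix a assume a: "a \<in> lattice_idx d L"
    show "(\<lambda>k. if k < d then restrict a {..<d} k else 0) = a"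
    proof (rule ext)
      fix k show "(if k < d then restrict a {..<d} k else 0) = a k"
        using a unfolding lattice_idx_def by (cases "k < d") auto
    qed
  qed
  show "\<forall>a'\<in>PiE {..<d} (\<lambda>_. {..<L}). restrict (\<lambda>k. if k < d then a' k else 0) {..<d} = a'"
  proof
    fix a' assume a: "a' \<in> PiE {..<d} (\<lambda>_. {..<L})"
    show "restrict (\<lambda>k. if k < d then a' k else 0) {..<d} = a'"
    proof (rule ext)
      fix k show "restrict (\<lambda>k. if k < d then a' k else 0) {..<d} k = a' k"
        using a by (cases "k < d") (auto simp: PiE_def extensional_def)
    qed
  qed
  show "(\<lambda>l. restrict l {..<d}) ` lattice_idx d L \<subseteq> PiE {..<d} (\<lambda>_. {..<L})"
  proof (rule image_subsetI)
    fix l assume "l \<in> lattice_idx d L"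
    then show "restrict l {..<d} \<in> PiE {..<d} (\<lambda>_. {..<L})"
      unfolding restrict_PiE_iff lattice_idx_def by auto
  qed
  show "(\<lambda>f k. if k < d then f k else 0) ` PiE {..<d} (\<lambda>_. {..<L}) \<subseteq> lattice_idx d L"
  proof (rule image_subsetI)
    fix f assume "f \<in> PiE {..<d} (\<lambda>_. {..<L})"
    then show "(\<lambda>k. if k < d then f k else 0) \<in> lattice_idx d L"
      unfolding lattice_idx_def by (auto simp: PiE_iff)
  qed
qed

lemma idx_finite: "finite (lattice_idx d L)"
  using bij_betw_finite[OF idx_bij] by (simp add: finite_PiE)

lemma idx_card: "card (lattice_idx d L) = L ^ d"
  using bij_betw_same_card[OF idx_bij] by (simp add: card_PiE)

lemma idx_mono: "lattice_idx d L \<subseteq> lattice_idx d (Suc L)"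
  unfolding lattice_idx_def by (auto simp: less_Suc_eq)

lemma idx_shift: "k < d \<Longrightarrow> (\<lambda>l. l(k := Suc (l k))) ` lattice_idx d L \<subseteq> lattice_idx d (Suc L)"
proof (rule image_subsetI)
  fix l assume "k < d" "l \<in> lattice_idx d L"
  then show "l(k := Suc (l k)) \<in> lattice_idx d (Suc L)"
    unfolding lattice_idx_def by (auto simp: less_SucI)
qed

lemma idx_zero: "L > 0 \<Longrightarrow> (\<lambda>_. 0) \<in> lattice_idx d L"
  by (auto simp: lattice_idx_def)

context fixes d :: nat and \<gamma> :: "nat \<Rightarrow> real" begin

definition mono :: "(nat \<Rightarrow> nat) \<Rightarrow> real" where "mono l = (\<Prod>k<d. \<gamma> k ^ l k)"

definition val :: "(nat \<Rightarrow> nat) set \<Rightarrow> ((nat \<Rightarrow> nat) \<Rightarrow> int) \<Rightarrow> real" where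
  "val J c = (\<Sum>l\<in>J. of_int (c l) * mono l)"

definition VV :: "(nat \<Rightarrow> nat) set \<Rightarrow> int \<Rightarrow> real set" where
  "VV J M = {val J c | c. \<forall>l\<in>J. \<bar>c l\<bar> \<le> M}"

lemma VV_sub: "VV J M \<subseteq> val J ` PiE J (\<lambda>_. {-M..M})"
proof
  fix x assume "x \<in> VV J M"
  then obtain c where c: "x = val J c" "\<forall>l\<in>J. \<bar>c l\<bar> \<le> M" by (auto simp: VV_def)
  have "restrict c J \<in> PiE J (\<lambda>_. {-M..M})" using c(2) by (auto simp: abs_le_iff)
  moreover have "val J (restrict c J) = x" using c(1) by (simp add: val_def)
  ultimately show "x \<in> val J ` PiE J (\<lambda>_. {-M..M})" by force
qed

lemma VV_card: assumes "finite J" "M \<ge> 0"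
  shows "finite (VV J M) \<and> card (VV J M) \<le> nat (2*M+1) ^ card J"
proof -
  have f: "finite (PiE J (\<lambda>_. {-M..M}))" using assms by (simp add: finite_PiE)
  have "card (VV J M) \<le> card (val J ` PiE J (\<lambda>_. {-M..M}))"
    by (rule card_mono[OF finite_imageI[OF f] VV_sub])
  also have "\<dots> \<le> card (PiE J (\<lambda>_. {-M..M}))" by (rule card_image_le[OF f])
  also have "\<dots> = nat (2*M+1) ^ card J" using assms by (simp add: card_PiE)
  finally show ?thesis using finite_subset[OF VV_sub finite_imageI[OF f]] by simp
qed

lemma VV_add: "x \<in> VV J M1 \<Longrightarrow> y \<in> VV J M2 \<Longrightarrow> x + y \<in> VV J (M1 + M2)"
proof -
  assume "x \<in> VV J M1" "y \<in> VV J M2"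
  then obtain c1 c2 where c: "x = val J c1" "\<forall>l\<in>J. \<bar>c1 l\<bar> \<le> M1" "y = val J c2" "\<forall>l\<in>J. \<bar>c2 l\<bar> \<le> M2"
    by (auto simp: VV_def)
  have "x + y = val J (\<lambda>l. c1 l + c2 l)" using c
    by (simp add: val_def sum.distrib distrib_right)
  moreover have "\<forall>l\<in>J. \<bar>c1 l + c2 l\<bar> \<le> M1 + M2" using c
    by (meson abs_triangle_ineq add_mono order_trans)
  ultimately show ?thesis unfolding VV_def by blast
qed

lemma VV_uminus: "x \<in> VV J M \<Longrightarrow> - x \<in> VV J M"
proof -
  assume "x \<in> VV J M"
  then obtain c where c: "x = val J c" "\<forall>l\<in>J. \<bar>c l\<bar> \<le> M" by (auto simp: VV_def)
  have "- x = val J (\<lambda>l. - c l)" using c by (simp add: val_def sum_negf)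
  moreover have "\<forall>l\<in>J. \<bar>- c l\<bar> \<le> M" using c by simp
  ultimately show ?thesis unfolding VV_def by blast
qed

lemma VV_monoM: "x \<in> VV J M \<Longrightarrow> M \<le> M' \<Longrightarrow> x \<in> VV J M'"
  unfolding VV_def by force

lemma VV_monoJ: assumes "x \<in> VV I M" "I \<subseteq> J" "finite J" "M \<ge> 0" shows "x \<in> VV J M"
proof -
  obtain c where c: "x = val I c" "\<forall>l\<in>I. \<bar>c l\<bar> \<le> M" using assms(1) by (auto simp: VV_def)
  have "x = val J (\<lambda>l. if l \<in> I then c l else 0)" unfolding c val_def
    by (rule sum.mono_neutral_cong_left[OF assms(3) assms(2)]) auto
  moreover have "\<forall>l\<in>J. \<bar>(if l \<in> I then c l else 0)\<bar> \<le> M" using c assms(4) by auto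
  ultimately show ?thesis unfolding VV_def by blast
qed

lemma mono_shift: assumes "k < d" shows "mono (l(k := Suc (l k))) = \<gamma> k * mono l"
proof -
  have k: "k \<in> {..<d}" using assms by simp
  have e1: "mono (l(k := Suc (l k))) = \<gamma> k ^ Suc (l k) * (\<Prod>j\<in>{..<d} - {k}. \<gamma> j ^ (l(k := Suc (l k))) j)"
    unfolding mono_def by (subst prod.remove[OF _ k]) auto
  have e2: "(\<Prod>j\<in>{..<d} - {k}. \<gamma> j ^ (l(k := Suc (l k))) j) = (\<Prod>j\<in>{..<d} - {k}. \<gamma> j ^ l j)"
    by (rule prod.cong) auto
  have e3: "mono l = \<gamma> k ^ l k * (\<Prod>j\<in>{..<d} - {k}. \<gamma> j ^ l j)"
    unfolding mono_def by (subst prod.remove[OF _ k]) auto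
  show ?thesis unfolding e1 e2 e3 by (simp add: mult_ac)
qed

lemma VV_shift: assumes "k < d" "x \<in> VV I M"
  shows "\<gamma> k * x \<in> VV ((\<lambda>l. l(k := Suc (l k))) ` I) M"
proof -
  let ?sh = "\<lambda>l::nat\<Rightarrow>nat. l(k := Suc (l k))"
  let ?un = "\<lambda>l::nat\<Rightarrow>nat. l(k := l k - 1)"
  obtain c where c: "x = val I c" "\<forall>l\<in>I. \<bar>c l\<bar> \<le> M" using assms(2) by (auto simp: VV_def)
  have un: "?un (?sh l) = l" for l by (simp add: fun_eq_iff)
  have inj: "inj_on ?sh I" by (metis (no_types, lifting) inj_onI un)
  have "val (?sh ` I) (\<lambda>l. c (?un l)) = (\<Sum>l\<in>I. of_int (c (?un (?sh l))) * mono (?sh l))"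
    unfolding val_def by (subst sum.reindex[OF inj]) (simp add: comp_def)
  also have "\<dots> = \<gamma> k * x" unfolding c val_def un mono_shift[OF assms(1)]
    by (simp add: sum_distrib_left mult_ac)
  finally have "\<gamma> k * x = val (?sh ` I) (\<lambda>l. c (?un l))" by simp
  moreover have "\<forall>l\<in>?sh ` I. \<bar>c (?un l)\<bar> \<le> M" using c un by auto
  ultimately show ?thesis unfolding VV_def by blast
qed

end


lemma norm_facts:
  fixes N :: "real^2 \<Rightarrow> real" and b :: "nat \<Rightarrow> real^2"
  assumes norm: "is_norm N" and ball: "{x. N x \<le> 1} = {x. \<forall>k < K. \<bar>x \<bullet> b k\<bar> \<le> 1}" and K: "K > 0"
  shows "N v \<ge> 0" "\<forall>k<K. \<bar>v \<bullet> b k\<bar> \<le> N v" "\<exists>k<K. N v = \<bar>v \<bullet> b k\<bar>"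
proof -
  have hom: "N (a *\<^sub>R x) = \<bar>a\<bar> * N x" for a x using norm by (simp add: is_norm_def)
  have tri: "N (x + y) \<le> N x + N y" for x y using norm by (simp add: is_norm_def)
  have z: "N x = 0 \<longleftrightarrow> x = 0" for x using norm by (simp add: is_norm_def)
  have inb: "N x \<le> 1 \<longleftrightarrow> (\<forall>k<K. \<bar>x \<bullet> b k\<bar> \<le> 1)" for x using ball by blast
  have "N (v + (-1) *\<^sub>R v) \<le> N v + N ((-1) *\<^sub>R v)" by (rule tri)
  then have "0 \<le> 2 * N v" using hom[of "-1" v] z[of 0] by simp
  then show nn: "N v \<ge> 0" by simp
  show le: "\<forall>k<K. \<bar>v \<bullet> b k\<bar> \<le> N v"
  proof (cases "v = 0")
    case True then show ?thesis using z[of 0] by simp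
  next
    case False
    then have p: "N v > 0" using nn z[of v] by simp
    have "N ((1 / N v) *\<^sub>R v) = 1" using hom[of "1 / N v" v] p by simp
    then have "N ((1 / N v) *\<^sub>R v) \<le> 1" by simp
    then have h: "\<forall>k<K. \<bar>((1 / N v) *\<^sub>R v) \<bullet> b k\<bar> \<le> 1" using inb by blast
    show ?thesis
    proof (intro allI impI)
      fix k assume "k < K"
      then have "\<bar>((1 / N v) *\<^sub>R v) \<bullet> b k\<bar> \<le> 1" using h by simp
      then have "\<bar>v \<bullet> b k\<bar> / N v \<le> 1" using p by (simp add: abs_mult)
      then show "\<bar>v \<bullet> b k\<bar> \<le> N v" using p by (simp add: divide_le_eq)
    qed
  qed
  show "\<exists>k<K. N v = \<bar>v \<bullet> b k\<bar>"
  proof (rule ccontr)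
    assume "\<not> ?thesis"
    then have lt: "\<forall>k<K. \<bar>v \<bullet> b k\<bar> < N v" using le by force
    define m where "m = Max ((\<lambda>k. \<bar>v \<bullet> b k\<bar>) ` {..<K})"
    have ne: "(\<lambda>k. \<bar>v \<bullet> b k\<bar>) ` {..<K} \<noteq> {}" using K by auto
    have mk: "\<bar>v \<bullet> b k\<bar> \<le> m" if "k < K" for k unfolding m_def using that by (intro Max_ge) auto
    have "m \<in> (\<lambda>k. \<bar>v \<bullet> b k\<bar>) ` {..<K}" unfolding m_def by (rule Max_in[OF _ ne]) auto
    then have mlt: "m < N v" "0 \<le> m" using lt by auto
    define s where "s = 2 / (N v + m)"
    have sp: "s > 0" using mlt unfolding s_def by simp
    have "\<forall>k<K. \<bar>(s *\<^sub>R v) \<bullet> b k\<bar> \<le> 1"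
    proof (intro allI impI)
      fix k assume "k < K"
      have "\<bar>(s *\<^sub>R v) \<bullet> b k\<bar> = s * \<bar>v \<bullet> b k\<bar>" using sp by (simp add: abs_mult)
      also have "\<dots> \<le> s * m" using mk[OF \<open>k < K\<close>] sp by simp
      also have "\<dots> \<le> 1" using mlt unfolding s_def by (simp add: field_simps)
      finally show "\<bar>(s *\<^sub>R v) \<bullet> b k\<bar> \<le> 1" .
    qed
    then have "N (s *\<^sub>R v) \<le> 1" using inb by simp
    moreover have "N (s *\<^sub>R v) = s * N v" using hom sp by simp
    moreover have "s * N v > 1" using mlt unfolding s_def by (simp add: field_simps)
    ultimately show False by simp
  qed
qed

lemma KM_bound:
  assumes km: "KM d \<gamma>" and L: "L > 0" and e: "\<epsilon> > 0"
  shows "\<exists>\<kappa>>0. \<forall>c. (\<exists>l\<in>lattice_idx d L. c l \<noteq> 0) \<longrightarrow>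
     \<kappa> \<le> \<bar>val d \<gamma> (lattice_idx d L) c\<bar> * real_of_int (Max ((\<lambda>l. \<bar>c l\<bar>) ` lattice_idx d L)) powr ((1 + \<epsilon>) * real L ^ d)"
proof -
  let ?f = "\<lambda>n::(nat \<Rightarrow> nat) \<Rightarrow> int.
              \<bar>\<Sum>l\<in>lattice_idx d L. of_int (n l) * (\<Prod>k<d. \<gamma> k ^ l k)\<bar>
              * real_of_int (Max ((\<lambda>l. \<bar>n l\<bar>) ` lattice_idx d L)) powr ((1 + \<epsilon>) * real L ^ d)"
  let ?S = "?f ` {n. \<exists>l\<in>lattice_idx d L. n l \<noteq> 0}"
  have pos: "Inf ?S > 0" using km L e unfolding KM_def by blast
  have bdd: "bdd_below ?S" by (rule bdd_belowI[of _ 0]) auto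
  show ?thesis
  proof (intro exI conjI allI impI)
    show "Inf ?S > 0" by (rule pos)
    fix c :: "(nat \<Rightarrow> nat) \<Rightarrow> int" assume "\<exists>l\<in>lattice_idx d L. c l \<noteq> 0"
    then have "?f c \<in> ?S" by blast
    from cInf_lower[OF this bdd] show "Inf ?S \<le> \<bar>val d \<gamma> (lattice_idx d L) c\<bar> * real_of_int (Max ((\<lambda>l. \<bar>c l\<bar>) ` lattice_idx d L)) powr ((1 + \<epsilon>) * real L ^ d)"
      by (simp add: val_def mono_def)
  qed
qed

lemma sep_bound:
  assumes kb: "\<forall>c. (\<exists>l\<in>I. c l \<noteq> 0) \<longrightarrow>
     \<kappa> \<le> \<bar>val d \<gamma> I c\<bar> * real_of_int (Max ((\<lambda>l. \<bar>c l\<bar>) ` I)) powr e"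
    and fin: "finite I" and e: "e \<ge> 0" and H: "H \<ge> 1"
    and a: "a \<in> PiE I (\<lambda>_. {0..<int H})" and a': "a' \<in> PiE I (\<lambda>_. {0..<int H})" and ne: "a \<noteq> a'"
  shows "\<kappa> / real H powr e \<le> \<bar>val d \<gamma> I a - val d \<gamma> I a'\<bar>"
proof -
  obtain l where l: "l \<in> I" "a l \<noteq> a' l" using PiE_ext[OF a a'] ne by blast
  define c where "c = (\<lambda>l. a l - a' l)"
  have cnz: "\<exists>l\<in>I. c l \<noteq> 0" using l c_def by auto
  have v: "val d \<gamma> I c = val d \<gamma> I a - val d \<gamma> I a'"
    unfolding val_def c_def by (simp add: sum_subtractf left_diff_distrib)
  have bnd: "\<forall>l\<in>I. \<bar>c l\<bar> \<le> int H" using a a' unfolding c_def by (force simp: PiE_iff)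
  have Mle: "Max ((\<lambda>l. \<bar>c l\<bar>) ` I) \<le> int H" using bnd fin l(1) by (subst Max_le_iff) auto
  have Mge: "Max ((\<lambda>l. \<bar>c l\<bar>) ` I) \<ge> 1"
  proof -
    obtain l where "l \<in> I" "c l \<noteq> 0" using cnz by blast
    then have "\<bar>c l\<bar> \<le> Max ((\<lambda>l. \<bar>c l\<bar>) ` I)" using fin by (intro Max_ge) auto
    then show ?thesis using \<open>c l \<noteq> 0\<close> by linarith
  qed
  have "real_of_int (Max ((\<lambda>l. \<bar>c l\<bar>) ` I)) powr e \<le> real H powr e"
    apply (rule powr_mono2[OF e]) using Mge Mle by linarith+
  then have m2: "\<bar>val d \<gamma> I c\<bar> * real_of_int (Max ((\<lambda>l. \<bar>c l\<bar>) ` I)) powr e \<le> \<bar>val d \<gamma> I c\<bar> * real H powr e"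
    by (rule mult_left_mono) simp
  have k1: "\<kappa> \<le> \<bar>val d \<gamma> I c\<bar> * real_of_int (Max ((\<lambda>l. \<bar>c l\<bar>) ` I)) powr e"
    using kb[rule_format, OF cnz] .
  have "\<kappa> \<le> \<bar>val d \<gamma> I c\<bar> * real H powr e" using k1 m2 by linarith
  moreover have "real H powr e > 0" using H by simp
  ultimately show ?thesis using v by (simp add: divide_le_eq)
qed

lemma inner2: "(x :: real^2) \<bullet> y = x $ 1 * y $ 1 + x $ 2 * y $ 2"
  by (simp add: inner_vec_def sum_2)

lemma exists_L:
  assumes e: "\<epsilon> > 0" and d: "d \<ge> 1"
  shows "\<exists>L::nat. L > 0 \<and> 1 \<le> \<epsilon> * real L ^ d \<and> real (Suc L) ^ d \<le> (1 + \<epsilon>) * real L ^ d"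
proof -
  have "((\<lambda>L::nat. real (Suc L) / real L) \<longlongrightarrow> 1) at_top" by real_asymp
  then have "((\<lambda>L::nat. (real (Suc L) / real L) ^ d) \<longlongrightarrow> 1 ^ d) at_top" by (rule tendsto_power)
  then have "eventually (\<lambda>L::nat. (real (Suc L) / real L) ^ d < 1 + \<epsilon>) at_top"
    using e by (intro order_tendstoD(2)) auto
  moreover have "eventually (\<lambda>L::nat. real L \<ge> 1 / \<epsilon> + 1) at_top" by real_asymp
  ultimately have "eventually (\<lambda>L::nat. (real (Suc L) / real L) ^ d < 1 + \<epsilon> \<and> real L \<ge> 1 / \<epsilon> + 1) at_top"
    by (rule eventually_conj)
  then obtain L0 :: nat where L0: "\<forall>L\<ge>L0. (real (Suc L) / real L) ^ d < 1 + \<epsilon> \<and> real L \<ge> 1 / \<epsilon> + 1"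
    by (auto simp: eventually_at_top_linorder)
  define L where "L = L0"
  have L: "(real (Suc L) / real L) ^ d < 1 + \<epsilon>" "real L \<ge> 1 / \<epsilon> + 1" using L0 unfolding L_def by auto
  have Lp: "real L > 0" using L(2) e by (smt (verit) divide_pos_pos)
  have "real L ^ 1 \<le> real L ^ d" using d Lp L(2) e
    by (intro power_increasing) (auto simp: field_simps)
  then have "1 \<le> \<epsilon> * real L ^ d" using L(2) e
    by (smt (verit, ccfv_SIG) divide_le_eq mult.commute mult_left_mono power_one_right)
  moreover have "real (Suc L) ^ d \<le> (1 + \<epsilon>) * real L ^ d"
    using L(1) Lp by (simp add: power_divide divide_less_eq)
  ultimately show ?thesis using Lp by auto
qed



theorem lemma2p1:
  fixes d :: nat and \<gamma> :: "nat \<Rightarrow> real" and N :: "real^2 \<Rightarrow> real" and b :: "nat \<Rightarrow> real^2"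
  assumes d_pos: "d \<ge> 1"
    and km: "KM d \<gamma>"
    and norm: "is_norm N"
    and ball: "{x. N x \<le> 1} = {x. \<forall>k < d + 3. \<bar>x \<bullet> b k\<bar> \<le> 1}"
    and sides: "\<forall>k < d + 3. \<exists>x y. x \<noteq> y \<and> N x \<le> 1 \<and> N y \<le> 1 \<and> x \<bullet> b k = 1 \<and> y \<bullet> b k = 1"
    and slope_gamma: "\<forall>k < d. has_slope (b k) (\<gamma> k)"
    and slope0: "has_slope (b d) 0"
    and slope1: "has_slope (b (d + 1)) 1"
    and slope_inf: "has_infinite_slope (b (d + 2))"
    and nonpar: "\<forall>i < d + 3. \<forall>j < d + 3. i \<noteq> j \<longrightarrow> \<not> (\<exists>t::real. b i = t *\<^sub>R b j)"
  shows "\<forall>\<epsilon>::real. \<epsilon> > 0 \<longrightarrow>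
    (\<exists>C c C'. C > 0 \<and> c > 0 \<and> C' > 0 \<and>
      (\<forall>M::nat. \<exists>n::nat. n \<ge> M \<and>
        (\<exists>A :: (real^2) set. A \<subseteq> cball 0 (1/2) \<and> finite A \<and> card A = n
          \<and> (\<forall>k < d + 3. real (card ((\<lambda>v. v \<bullet> b k) ` diff_set A)) \<le> C * real n powr (1/2 + \<epsilon>))
          \<and> real (card {N (x - x') | x x'. x \<in> A \<and> x' \<in> A}) \<le> C' * real n powr (1/2 + \<epsilon>)
          \<and> (\<forall>x\<in>A. \<forall>x'\<in>A. x \<noteq> x' \<longrightarrow> N (x - x') \<ge> c * real n powr (- 1/2 - \<epsilon>)))))"
proof (intro allI impI)
  fix \<epsilon> :: real assume e: "\<epsilon> > 0"
  obtain L :: nat where L: "L > 0" "1 \<le> \<epsilon> * real L ^ d" "real (Suc L) ^ d \<le> (1 + \<epsilon>) * real L ^ d"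
    using exists_L[OF e d_pos] by blast
  define I where "I = lattice_idx d L"
  define J where "J = lattice_idx d (Suc L)"
  define K where "K = L ^ d"
  define K' where "K' = Suc L ^ d"
  have finI: "finite I" and finJ: "finite J" unfolding I_def J_def by (rule idx_finite)+
  have cardI: "card I = K" and cardJ: "card J = K'" unfolding I_def J_def K_def K'_def by (rule idx_card)+
  have IJ: "I \<subseteq> J" unfolding I_def J_def by (rule idx_mono)
  have shJ: "k < d \<Longrightarrow> (\<lambda>l. l(k := Suc (l k))) ` I \<subseteq> J" for k unfolding I_def J_def by (rule idx_shift)
  have Kpos: "K \<ge> 1" unfolding K_def using L(1) by simp
  have KK': "real K' \<le> (1 + \<epsilon>) * real K" unfolding K_def K'_def using L(3) by simp
  have eK: "1 \<le> \<epsilon> * real K" unfolding K_def using L(2) by simp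
  define e1 where "e1 = (1 + \<epsilon>) * real L ^ d"
  have e1K: "e1 = (1 + \<epsilon>) * real K" unfolding e1_def K_def by simp
  have e1pos: "e1 \<ge> 0" unfolding e1_def using e by simp
  obtain \<kappa> where kp: "\<kappa> > 0" and kb: "\<forall>c. (\<exists>l\<in>I. c l \<noteq> 0) \<longrightarrow>
     \<kappa> \<le> \<bar>val d \<gamma> I c\<bar> * real_of_int (Max ((\<lambda>l. \<bar>c l\<bar>) ` I)) powr e1"
    using KM_bound[OF km L(1) e] unfolding I_def e1_def by blast
  define G where "G = (\<Sum>l\<in>I. \<bar>mono d \<gamma> l\<bar>)"
  have G0: "G \<ge> 0" unfolding G_def by (simp add: sum_nonneg)
  have bg: "b k $ 1 = - \<gamma> k * b k $ 2" if "k < d" for k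
    using slope_gamma that unfolding has_slope_def by (auto simp: field_simps)
  have b0: "b d $ 1 = 0" "b d $ 2 \<noteq> 0" using slope0 unfolding has_slope_def by auto
  have b1: "b (d+1) $ 1 = - b (d+1) $ 2" using slope1 unfolding has_slope_def by (auto simp: field_simps)
  have b2: "b (d+2) $ 2 = 0" "b (d+2) $ 1 \<noteq> 0" using slope_inf unfolding has_infinite_slope_def by auto
  define \<beta> where "\<beta> = min \<bar>b d $ 2\<bar> \<bar>b (d+2) $ 1\<bar>"
  have \<beta>p: "\<beta> > 0" unfolding \<beta>_def using b0 b2 by simp
  have Nf: "N v \<ge> 0" "\<forall>k<d+3. \<bar>v \<bullet> b k\<bar> \<le> N v" "\<exists>k<d+3. N v = \<bar>v \<bullet> b k\<bar>" for v
    using norm_facts[OF norm ball] by auto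
  define C :: real where "C = 9 ^ K'"
  define c where "c = \<beta> * \<kappa> / (4 * (G + 1))"
  define C' where "C' = real (d + 3) * C"
  show "\<exists>C c C'. C > 0 \<and> c > 0 \<and> C' > 0 \<and>
      (\<forall>M::nat. \<exists>n::nat. n \<ge> M \<and>
        (\<exists>A :: (real^2) set. A \<subseteq> cball 0 (1/2) \<and> finite A \<and> card A = n
          \<and> (\<forall>k < d + 3. real (card ((\<lambda>v. v \<bullet> b k) ` diff_set A)) \<le> C * real n powr (1/2 + \<epsilon>))
          \<and> real (card {N (x - x') | x x'. x \<in> A \<and> x' \<in> A}) \<le> C' * real n powr (1/2 + \<epsilon>)
          \<and> (\<forall>x\<in>A. \<forall>x'\<in>A. x \<noteq> x' \<longrightarrow> N (x - x') \<ge> c * real n powr (- 1/2 - \<epsilon>))))"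
  proof (intro exI conjI)
    show Cp: "C > 0" unfolding C_def by simp
    show "c > 0" unfolding c_def using \<beta>p kp G0 by simp
    show "C' > 0" unfolding C'_def using Cp by simp
    show "\<forall>M::nat. \<exists>n::nat. n \<ge> M \<and>
        (\<exists>A :: (real^2) set. A \<subseteq> cball 0 (1/2) \<and> finite A \<and> card A = n
          \<and> (\<forall>k < d + 3. real (card ((\<lambda>v. v \<bullet> b k) ` diff_set A)) \<le> C * real n powr (1/2 + \<epsilon>))
          \<and> real (card {N (x - x') | x x'. x \<in> A \<and> x' \<in> A}) \<le> C' * real n powr (1/2 + \<epsilon>)
          \<and> (\<forall>x\<in>A. \<forall>x'\<in>A. x \<noteq> x' \<longrightarrow> N (x - x') \<ge> c * real n powr (- 1/2 - \<epsilon>)))"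
    proof
    fix M :: nat
    define H where "H = Suc M"
    define n where "n = H ^ (2 * K)"
    have H1: "real H \<ge> 1" unfolding H_def by simp
    have nM: "n \<ge> M"
    proof -
      have "H ^ 1 \<le> H ^ (2 * K)" using Kpos unfolding H_def by (intro power_increasing) auto
      then show ?thesis unfolding n_def H_def by simp
    qed
    define PI where "PI = PiE I (\<lambda>_. {0..<int H})"
    define P where "P = val d \<gamma> I ` PI"
    define lam where "lam = 1 / (4 * real H * (G + 1))"
    have lamp: "lam > 0" unfolding lam_def using H1 G0 by simp
    define vec where "vec = (\<lambda>(p, q). vector [lam * p, lam * q] :: real^2)"
    define A where "A = vec ` (P \<times> P)"
    have finPI: "finite PI" unfolding PI_def using finI by (simp add: finite_PiE)
    have sepP: "\<kappa> / real H powr e1 \<le> \<bar>p - p'\<bar>" if pp: "p \<in> P" "p' \<in> P" "p \<noteq> p'" for p p'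
    proof -
      obtain a a' where a: "a \<in> PI" "a' \<in> PI" "p = val d \<gamma> I a" "p' = val d \<gamma> I a'"
        using pp unfolding P_def by blast
      have ne: "a \<noteq> a'" using a pp by auto
      show ?thesis using sep_bound[OF kb finI e1pos _ _ _ ne] a H1 unfolding PI_def by simp
    qed
    have injP: "inj_on (val d \<gamma> I) PI"
    proof (rule inj_onI)
      fix a a' assume a: "a \<in> PI" "a' \<in> PI" "val d \<gamma> I a = val d \<gamma> I a'"
      show "a = a'"
      proof (rule ccontr)
        assume ne: "a \<noteq> a'"
        have "\<kappa> / real H powr e1 \<le> \<bar>val d \<gamma> I a - val d \<gamma> I a'\<bar>"
          using sep_bound[OF kb finI e1pos _ _ _ ne] a H1 unfolding PI_def by simp
        moreover have "\<kappa> / real H powr e1 > 0" using kp H1 by simp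
        ultimately show False using a(3) by simp
      qed
    qed
    have cardP0: "card P = card PI" unfolding P_def by (rule card_image[OF injP])
    have cardP: "card P = H ^ K"
      unfolding cardP0 PI_def using finI cardI by (simp add: card_PiE)
    have finP: "finite P" unfolding P_def using finPI by simp
    have PV: "p \<in> VV d \<gamma> I (int H)" if pp: "p \<in> P" for p
    proof -
      obtain a where a: "a \<in> PI" "p = val d \<gamma> I a" using pp unfolding P_def by blast
      have "\<forall>l\<in>I. \<bar>a l\<bar> \<le> int H" using a(1) unfolding PI_def by (force simp: PiE_iff)
      then show ?thesis unfolding VV_def using a(2) by blast
    qed
    have Pbound: "\<bar>p\<bar> \<le> real H * G" if pp: "p \<in> P" for p
    proof -
      obtain a where a: "a \<in> PI" "p = val d \<gamma> I a" using pp unfolding P_def by blast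
      have ab: "\<bar>a l\<bar> \<le> int H" if "l \<in> I" for l using a(1) that unfolding PI_def by (force simp: PiE_iff)
      have "\<bar>p\<bar> \<le> (\<Sum>l\<in>I. \<bar>of_int (a l) * mono d \<gamma> l\<bar>)" unfolding a(2) val_def by (rule sum_abs)
      also have "\<dots> \<le> (\<Sum>l\<in>I. real H * \<bar>mono d \<gamma> l\<bar>)"
      proof (rule sum_mono)
        fix l assume "l \<in> I"
        then have "\<bar>real_of_int (a l)\<bar> \<le> real H" using ab by (metis of_int_abs of_int_le_iff of_int_of_nat_eq)
        then show "\<bar>of_int (a l) * mono d \<gamma> l\<bar> \<le> real H * \<bar>mono d \<gamma> l\<bar>"
          by (simp add: abs_mult mult_right_mono)
      qed
      also have "\<dots> = real H * G" unfolding G_def by (simp add: sum_distrib_left)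
      finally show ?thesis .
    qed
    have vec1: "vec (p, q) $ 1 = lam * p" and vec2: "vec (p, q) $ 2 = lam * q" for p q
      unfolding vec_def by simp_all
    have injvec: "inj_on vec (P \<times> P)"
    proof (rule inj_onI)
      fix x y assume "x \<in> P \<times> P" "y \<in> P \<times> P" "vec x = vec y"
      then obtain p q p' q' where "x = (p, q)" "y = (p', q')" "vec (p, q) = vec (p', q')" by auto
      moreover have "lam * p = lam * p'" "lam * q = lam * q'" using calculation(3) vec1 vec2 by metis+
      ultimately show "x = y" using lamp by simp
    qed
    have finA: "finite A" unfolding A_def using finP by simp
    have cardA: "card A = n" unfolding A_def card_image[OF injvec] card_cartesian_product cardP n_def
      by (simp add: power_add[symmetric] mult_2)
    have Aball: "A \<subseteq> cball 0 (1/2)"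
    proof
      fix x assume "x \<in> A"
      then obtain p q where pq: "p \<in> P" "q \<in> P" "x = vec (p, q)" unfolding A_def by auto
      have "norm x \<le> \<bar>x $ 1\<bar> + \<bar>x $ 2\<bar>" using norm_le_l1_cart[of x] by (simp add: sum_2)
      also have "\<dots> = lam * \<bar>p\<bar> + lam * \<bar>q\<bar>" using pq(3) vec1 vec2 lamp by (simp add: abs_mult)
      also have "\<dots> \<le> lam * (real H * G) + lam * (real H * G)"
        using Pbound[OF pq(1)] Pbound[OF pq(2)] lamp by (intro add_mono mult_left_mono) auto
      also have "\<dots> \<le> 1/2"
      proof -
        have hp: "real H > 0" using H1 by simp
        have gp: "G + 1 > 0" using G0 by simp
        define X where "X = real H * (G + 1)"
        have Xp: "X > 0" unfolding X_def using hp gp by simp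
        have lX: "lam = 1 / (4 * X)" unfolding lam_def X_def by (simp add: mult.assoc)
        have q1: "lam * X = 1 / 4" unfolding lX using Xp by simp
        have q2: "lam * (real H * G) \<le> lam * X" unfolding X_def using lamp hp
          by (intro mult_left_mono) auto
        show ?thesis using q1 q2 by linarith
      qed
      finally show "x \<in> cball 0 (1/2)" by simp
    qed
    have diffA: "\<exists>p q p' q'. p \<in> P \<and> q \<in> P \<and> p' \<in> P \<and> q' \<in> P \<and> v = vec (p, q) - vec (p', q')"
      if "v \<in> diff_set A" for v
      using that unfolding diff_set_def A_def by blast
    have innerv: "(vec (p, q) - vec (p', q')) \<bullet> y = lam * (p - p') * y $ 1 + lam * (q - q') * y $ 2" for p q p' q' y
      by (simp add: inner_diff_left inner2 vec1 vec2 algebra_simps)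
    have proj: "\<exists>s. (\<lambda>v. v \<bullet> b k) ` diff_set A \<subseteq> (\<lambda>z. s * z) ` VV d \<gamma> J (4 * int H)" if k: "k < d + 3" for k
    proof -
      have H0: "int H \<ge> 0" by simp
      have DV: "p - p' \<in> VV d \<gamma> J (2 * int H)" if "p \<in> P" "p' \<in> P" for p p'
      proof -
        have "p + - p' \<in> VV d \<gamma> I (int H + int H)" using PV[OF that(1)] VV_uminus[OF PV[OF that(2)]] by (rule VV_add)
        then show ?thesis using VV_monoJ[OF _ IJ finJ] H0 by simp
      qed
      have DV4: "x \<in> VV d \<gamma> J (4 * int H)" if "x \<in> VV d \<gamma> J (2 * int H)" for x
        using VV_monoM[OF that] by simp
      have "k < d \<or> k = d \<or> k = d + 1 \<or> k = d + 2" using k by linarith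
      then show ?thesis
      proof (elim disjE)
        assume kd: "k < d"
        show ?thesis
        proof (intro exI subsetI)
          fix z assume "z \<in> (\<lambda>v. v \<bullet> b k) ` diff_set A"
          then obtain p q p' q' where pq: "p \<in> P" "q \<in> P" "p' \<in> P" "q' \<in> P" "z = (vec (p, q) - vec (p', q')) \<bullet> b k"
            using diffA by blast
          have "\<gamma> k * (- (p - p')) \<in> VV d \<gamma> ((\<lambda>l. l(k := Suc (l k))) ` I) (2 * int H)"
          proof (rule VV_shift[OF kd VV_uminus])
            have "p + - p' \<in> VV d \<gamma> I (int H + int H)" using PV[OF pq(1)] VV_uminus[OF PV[OF pq(3)]] by (rule VV_add)
            then show "p - p' \<in> VV d \<gamma> I (2 * int H)" by simp
          qed
          then have "\<gamma> k * (- (p - p')) \<in> VV d \<gamma> J (2 * int H)" using VV_monoJ[OF _ shJ[OF kd] finJ] H0 by simp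
          then have "(q - q') + \<gamma> k * (- (p - p')) \<in> VV d \<gamma> J (2 * int H + 2 * int H)"
            using DV[OF pq(2) pq(4)] by (intro VV_add)
          then have m: "(q - q') + \<gamma> k * (- (p - p')) \<in> VV d \<gamma> J (4 * int H)" by simp
          have "z = (lam * b k $ 2) * ((q - q') + \<gamma> k * (- (p - p')))"
            unfolding pq(5) innerv bg[OF kd] by (simp add: algebra_simps)
          then show "z \<in> (\<lambda>z. (lam * b k $ 2) * z) ` VV d \<gamma> J (4 * int H)" using m by blast
        qed
      next
        assume kd: "k = d"
        show ?thesis
        proof (intro exI subsetI)
          fix z assume "z \<in> (\<lambda>v. v \<bullet> b k) ` diff_set A"
          then obtain p q p' q' where pq: "p \<in> P" "q \<in> P" "p' \<in> P" "q' \<in> P" "z = (vec (p, q) - vec (p', q')) \<bullet> b k"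
            using diffA by blast
          have m: "q - q' \<in> VV d \<gamma> J (4 * int H)" using DV4[OF DV[OF pq(2) pq(4)]] .
          have "z = (lam * b d $ 2) * (q - q')"
            unfolding pq(5) innerv kd b0(1) by (simp add: algebra_simps)
          then show "z \<in> (\<lambda>z. (lam * b d $ 2) * z) ` VV d \<gamma> J (4 * int H)" using m by blast
        qed
      next
        assume kd: "k = d + 1"
        show ?thesis
        proof (intro exI subsetI)
          fix z assume "z \<in> (\<lambda>v. v \<bullet> b k) ` diff_set A"
          then obtain p q p' q' where pq: "p \<in> P" "q \<in> P" "p' \<in> P" "q' \<in> P" "z = (vec (p, q) - vec (p', q')) \<bullet> b k"
            using diffA by blast
          have "(q - q') + - (p - p') \<in> VV d \<gamma> J (2 * int H + 2 * int H)"
            using DV[OF pq(2) pq(4)] VV_uminus[OF DV[OF pq(1) pq(3)]] by (rule VV_add)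
          then have m: "(q - q') + - (p - p') \<in> VV d \<gamma> J (4 * int H)" by simp
          have "z = (lam * b (d+1) $ 2) * ((q - q') + - (p - p'))"
            unfolding pq(5) innerv kd b1 by (simp add: algebra_simps)
          then show "z \<in> (\<lambda>z. (lam * b (d+1) $ 2) * z) ` VV d \<gamma> J (4 * int H)" using m by blast
        qed
      next
        assume kd: "k = d + 2"
        show ?thesis
        proof (intro exI subsetI)
          fix z assume "z \<in> (\<lambda>v. v \<bullet> b k) ` diff_set A"
          then obtain p q p' q' where pq: "p \<in> P" "q \<in> P" "p' \<in> P" "q' \<in> P" "z = (vec (p, q) - vec (p', q')) \<bullet> b k"
            using diffA by blast
          have m: "p - p' \<in> VV d \<gamma> J (4 * int H)" using DV4[OF DV[OF pq(1) pq(3)]] .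
          have "z = (lam * b (d+2) $ 1) * (p - p')"
            unfolding pq(5) innerv kd b2(1) by (simp add: algebra_simps)
          then show "z \<in> (\<lambda>z. (lam * b (d+2) $ 1) * z) ` VV d \<gamma> J (4 * int H)" using m by blast
        qed
      qed
    qed
    have VVc: "finite (VV d \<gamma> J (4 * int H)) \<and> card (VV d \<gamma> J (4 * int H)) \<le> nat (2 * (4 * int H) + 1) ^ K'"
      using VV_card[OF finJ, of "4 * int H"] cardJ by simp
    have npow: "real n powr (1/2 + \<epsilon>) = real H powr ((1 + 2 * \<epsilon>) * real K)"
    proof -
      have "real n = real H powr (2 * real K)" unfolding n_def using H1
        by (simp add: powr_realpow[symmetric])
      then show ?thesis by (simp add: powr_powr algebra_simps)
    qed
    have bound: "real (nat (2 * (4 * int H) + 1) ^ K') \<le> C * real n powr (1/2 + \<epsilon>)"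
    proof -
      have "real (nat (2 * (4 * int H) + 1) ^ K') = (8 * real H + 1) ^ K'" by simp
      also have "\<dots> \<le> (9 * real H) ^ K'" using H1 by (intro power_mono) auto
      also have "\<dots> = C * real H ^ K'" unfolding C_def by (simp add: power_mult_distrib)
      also have "real H ^ K' = real H powr real K'" using H1 by (simp add: powr_realpow)
      also have "\<dots> \<le> real H powr ((1 + 2 * \<epsilon>) * real K)"
      proof (rule powr_mono)
        have "(1 + \<epsilon>) * real K \<le> (1 + 2 * \<epsilon>) * real K" using e by (intro mult_right_mono) auto
        then show "real K' \<le> (1 + 2 * \<epsilon>) * real K" using KK' by linarith
      qed (use H1 in simp)
      finally show ?thesis unfolding npow using Cp by simp
    qed
    have projcard: "real (card ((\<lambda>v. v \<bullet> b k) ` diff_set A)) \<le> C * real n powr (1/2 + \<epsilon>)"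
      and projfin: "finite ((\<lambda>v. v \<bullet> b k) ` diff_set A)" if kk: "k < d + 3" for k
    proof -
      obtain s where s: "(\<lambda>v. v \<bullet> b k) ` diff_set A \<subseteq> (\<lambda>z. s * z) ` VV d \<gamma> J (4 * int H)"
        using proj[OF kk] by blast
      have f: "finite ((\<lambda>z. s * z) ` VV d \<gamma> J (4 * int H))" using VVc by simp
      show "finite ((\<lambda>v. v \<bullet> b k) ` diff_set A)" using finite_subset[OF s f] .
      have "card ((\<lambda>v. v \<bullet> b k) ` diff_set A) \<le> card ((\<lambda>z. s * z) ` VV d \<gamma> J (4 * int H))"
        by (rule card_mono[OF f s])
      also have "\<dots> \<le> card (VV d \<gamma> J (4 * int H))" using VVc by (intro card_image_le) simp
      also have "\<dots> \<le> nat (2 * (4 * int H) + 1) ^ K'" using VVc by simp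
      finally have "real (card ((\<lambda>v. v \<bullet> b k) ` diff_set A)) \<le> real (nat (2 * (4 * int H) + 1) ^ K')"
        by (rule of_nat_mono)
      then show "real (card ((\<lambda>v. v \<bullet> b k) ` diff_set A)) \<le> C * real n powr (1/2 + \<epsilon>)"
        using bound by linarith
    qed
    have distcard: "real (card {N (x - x') | x x'. x \<in> A \<and> x' \<in> A}) \<le> C' * real n powr (1/2 + \<epsilon>)"
    proof -
      let ?U = "\<Union>k\<in>{..<d+3}. abs ` ((\<lambda>v. v \<bullet> b k) ` diff_set A)"
      have sub: "{N (x - x') | x x'. x \<in> A \<and> x' \<in> A} \<subseteq> ?U"
      proof
        fix t assume "t \<in> {N (x - x') | x x'. x \<in> A \<and> x' \<in> A}"
        then obtain x x' where xx: "x \<in> A" "x' \<in> A" "t = N (x - x')" by blast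
        obtain k where k: "k < d + 3" "N (x - x') = \<bar>(x - x') \<bullet> b k\<bar>" using Nf(3) by blast
        have "x - x' \<in> diff_set A" using xx unfolding diff_set_def by blast
        then show "t \<in> ?U" using k xx(3) by blast
      qed
      have finU: "finite ?U" by (intro finite_UN_I finite_imageI projfin) auto
      have "card {N (x - x') | x x'. x \<in> A \<and> x' \<in> A} \<le> card ?U" by (rule card_mono[OF finU sub])
      also have "\<dots> \<le> (\<Sum>k<d+3. card (abs ` ((\<lambda>v. v \<bullet> b k) ` diff_set A)))" by (rule card_UN_le) simp
      also have "\<dots> \<le> (\<Sum>k<d+3. card ((\<lambda>v. v \<bullet> b k) ` diff_set A))"
        by (intro sum_mono card_image_le projfin) simp
      finally have "real (card {N (x - x') | x x'. x \<in> A \<and> x' \<in> A}) \<le> real (\<Sum>k<d+3. card ((\<lambda>v. v \<bullet> b k) ` diff_set A))"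
        by (rule of_nat_mono)
      also have "\<dots> = (\<Sum>k<d+3. real (card ((\<lambda>v. v \<bullet> b k) ` diff_set A)))" by (rule of_nat_sum)
      also have "\<dots> \<le> (\<Sum>k<d+3. C * real n powr (1/2 + \<epsilon>))" by (intro sum_mono projcard) simp
      also have "\<dots> = C' * real n powr (1/2 + \<epsilon>)" unfolding C'_def by simp
      finally show ?thesis .
    qed
    have sepA: "N (x - x') \<ge> c * real n powr (- 1/2 - \<epsilon>)" if xx: "x \<in> A" "x' \<in> A" "x \<noteq> x'" for x x'
    proof -
      obtain p q p' q' where pq: "p \<in> P" "q \<in> P" "p' \<in> P" "q' \<in> P" "x = vec (p, q)" "x' = vec (p', q')"
        using xx(1,2) unfolding A_def by auto
      have ne: "p \<noteq> p' \<or> q \<noteq> q'" using pq xx(3) by auto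
      have Hp: "real H powr e1 > 0" using H1 by simp
      have lowD: "\<kappa> / real H powr e1 \<le> max \<bar>p - p'\<bar> \<bar>q - q'\<bar>"
      proof (cases "p \<noteq> p'")
        case True
        then have "\<kappa> / real H powr e1 \<le> \<bar>p - p'\<bar>" using sepP pq by blast
        then show ?thesis by linarith
      next
        case False
        then have "q \<noteq> q'" using ne by blast
        then have "\<kappa> / real H powr e1 \<le> \<bar>q - q'\<bar>" using sepP pq by blast
        then show ?thesis by linarith
      qed
      have Nge1: "\<bar>(x - x') \<bullet> b (d+2)\<bar> \<le> N (x - x')" and Nge2: "\<bar>(x - x') \<bullet> b d\<bar> \<le> N (x - x')" using Nf(2) by auto
      have i1: "\<bar>(x - x') \<bullet> b (d+2)\<bar> = lam * \<bar>p - p'\<bar> * \<bar>b (d+2) $ 1\<bar>"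
        unfolding pq(5,6) innerv b2(1) using lamp by (simp add: abs_mult)
      have i2: "\<bar>(x - x') \<bullet> b d\<bar> = lam * \<bar>q - q'\<bar> * \<bar>b d $ 2\<bar>"
        unfolding pq(5,6) innerv b0(1) using lamp by (simp add: abs_mult)
      have "lam * \<beta> * max \<bar>p - p'\<bar> \<bar>q - q'\<bar> \<le> N (x - x')"
      proof (cases "\<bar>q - q'\<bar> \<le> \<bar>p - p'\<bar>")
        case True
        have mx: "max \<bar>p - p'\<bar> \<bar>q - q'\<bar> = \<bar>p - p'\<bar>" using True by simp
        have "\<beta> \<le> \<bar>b (d+2) $ 1\<bar>" unfolding \<beta>_def by simp
        then have "\<beta> * \<bar>p - p'\<bar> \<le> \<bar>b (d+2) $ 1\<bar> * \<bar>p - p'\<bar>" by (rule mult_right_mono) simp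
        then have h2: "lam * (\<beta> * \<bar>p - p'\<bar>) \<le> lam * (\<bar>b (d+2) $ 1\<bar> * \<bar>p - p'\<bar>)"
          using lamp by (intro mult_left_mono) auto
        have h1: "lam * \<beta> * max \<bar>p - p'\<bar> \<bar>q - q'\<bar> = lam * (\<beta> * \<bar>p - p'\<bar>)" unfolding mx by simp
        have h3: "lam * (\<bar>b (d+2) $ 1\<bar> * \<bar>p - p'\<bar>) = \<bar>(x - x') \<bullet> b (d+2)\<bar>" unfolding i1 by simp
        show ?thesis using h1 h2 h3 Nge1 by linarith
      next
        case False
        have mx: "max \<bar>p - p'\<bar> \<bar>q - q'\<bar> = \<bar>q - q'\<bar>" using False by simp
        have "\<beta> \<le> \<bar>b d $ 2\<bar>" unfolding \<beta>_def by simp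
        then have "\<beta> * \<bar>q - q'\<bar> \<le> \<bar>b d $ 2\<bar> * \<bar>q - q'\<bar>" by (rule mult_right_mono) simp
        then have h2: "lam * (\<beta> * \<bar>q - q'\<bar>) \<le> lam * (\<bar>b d $ 2\<bar> * \<bar>q - q'\<bar>)"
          using lamp by (intro mult_left_mono) auto
        have h1: "lam * \<beta> * max \<bar>p - p'\<bar> \<bar>q - q'\<bar> = lam * (\<beta> * \<bar>q - q'\<bar>)" unfolding mx by simp
        have h3: "lam * (\<bar>b d $ 2\<bar> * \<bar>q - q'\<bar>) = \<bar>(x - x') \<bullet> b d\<bar>" unfolding i2 by simp
        show ?thesis using h1 h2 h3 Nge2 by linarith
      qed
      moreover have "lam * \<beta> * (\<kappa> / real H powr e1) \<le> lam * \<beta> * max \<bar>p - p'\<bar> \<bar>q - q'\<bar>"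
        using lowD lamp \<beta>p by (intro mult_left_mono) auto
      moreover have "c * real n powr (- 1/2 - \<epsilon>) \<le> lam * \<beta> * (\<kappa> / real H powr e1)"
      proof -
        have "real n powr (- 1/2 - \<epsilon>) = real H powr (- ((1 + 2 * \<epsilon>) * real K))"
        proof -
          have "real n = real H powr (2 * real K)" unfolding n_def using H1
            by (simp add: powr_realpow[symmetric])
          then show ?thesis by (simp add: powr_powr algebra_simps)
        qed
        also have "\<dots> \<le> real H powr (- (1 + e1))"
          using H1 eK unfolding e1K by (intro powr_mono) (auto simp: algebra_simps)
        also have "\<dots> = 1 / (real H * real H powr e1)"
        proof -
          have "real H powr (1 + e1) = real H * real H powr e1" using H1 by (simp add: powr_add)
          moreover have "real H powr (- (1 + e1)) = inverse (real H powr (1 + e1))" by (rule powr_minus)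
          ultimately show ?thesis by (simp only: inverse_eq_divide)
        qed
        finally have h: "real n powr (- 1/2 - \<epsilon>) \<le> 1 / (real H * real H powr e1)" .
        have "c * real n powr (- 1/2 - \<epsilon>) \<le> c * (1 / (real H * real H powr e1))"
          using h \<open>c > 0\<close> by (intro mult_left_mono) auto
        also have "\<dots> = lam * \<beta> * (\<kappa> / real H powr e1)"
          unfolding c_def lam_def using H1 G0 Hp by (simp add: field_simps)
        finally show ?thesis .
      qed
      ultimately show ?thesis by linarith
    qed
    show "\<exists>n::nat. n \<ge> M \<and>
        (\<exists>A :: (real^2) set. A \<subseteq> cball 0 (1/2) \<and> finite A \<and> card A = n
          \<and> (\<forall>k < d + 3. real (card ((\<lambda>v. v \<bullet> b k) ` diff_set A)) \<le> C * real n powr (1/2 + \<epsilon>))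
          \<and> real (card {N (x - x') | x x'. x \<in> A \<and> x' \<in> A}) \<le> C' * real n powr (1/2 + \<epsilon>)
          \<and> (\<forall>x\<in>A. \<forall>x'\<in>A. x \<noteq> x' \<longrightarrow> N (x - x') \<ge> c * real n powr (- 1/2 - \<epsilon>)))"
      using nM Aball finA cardA projcard distcard sepA by blast
    qed
  qed
qed

end
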